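(* Let $0\le r\le n/2$, let $B = B(n,r)=\{x\in\{0,1\}^n : |x|\le r\}$, and let $A$ be the adjacency matrix of the subgraph of the Hamming cube induced by $B$. For $y \in B$, let $S^{(B)}_y$ be the space of real functions $f$ on $B$ such that $f(x)$ depends only on the pair of Hamming distances $(|x|, |x-y|)$. Then $S^{(B)}_y$ is an invariant subspace of $A$.
   Context: $\{0,1\}^n$ is the Hamming cube (vertices adjacent iff Hamming distance $1$), $|x-y|$ the Hamming distance and $|x|=|x-0|$. *)

theory Defs
  imports Complex_Main
begin

text \<open>A point x of the Hamming cube {0,1}^n is represented by its support, a subset of {0..<n}.\<close>

definition cube :: "nat \<Rightarrow> nat set set" where
  "cube n = Pow {0..<n}"

definition hdist :: "nat set \<Rightarrow> nat set \<Rightarrow> nat" where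
  "hdist x y = card ((x - y) \<union> (y - x))"

definition weight :: "nat set \<Rightarrow> nat" where
  "weight x = hdist x {}"

definition ball :: "nat \<Rightarrow> nat \<Rightarrow> nat set set" where
  "ball n r = {x \<in> cube n. weight x \<le> r}"

definition adj_matrix :: "nat set set \<Rightarrow> nat set \<Rightarrow> nat set \<Rightarrow> real" where
  "adj_matrix B x z = (if x \<in> B \<and> z \<in> B \<and> hdist x z = 1 then 1 else 0)"

definition mat_apply :: "nat set set \<Rightarrow> (nat set \<Rightarrow> nat set \<Rightarrow> real) \<Rightarrow> (nat set \<Rightarrow> real) \<Rightarrow> nat set \<Rightarrow> real" where
  "mat_apply B A f x = (\<Sum>z\<in>B. A x z * f z)"

text \<open>S^(B)_y: real functions on B whose value at x depends only on (|x|, |x - y|).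
  Functions on B are modelled as functions on all sets; only values on B matter.\<close>
definition S_space :: "nat set set \<Rightarrow> nat set \<Rightarrow> (nat set \<Rightarrow> real) set" where
  "S_space B y = {f. \<forall>x\<in>B. \<forall>x'\<in>B. weight x = weight x' \<and> hdist x y = hdist x' y \<longrightarrow> f x = f x'}"

end

theory Submission
  imports Defs
begin

lemma card_sym_diff:
  assumes "finite a" "finite b"
  shows "card ((a - b) \<union> (b - a)) = card (a - b) + card (b - a)"
  using assms by (subst card_Un_disjoint) auto

lemma perm_exists:
  fixes n :: nat and x x' y :: "nat set"
  assumes x: "x \<subseteq> {0..<n}" and x': "x' \<subseteq> {0..<n}" and y: "y \<subseteq> {0..<n}"
    and cx: "card x = card x'"
    and cd: "card ((x - y) \<union> (y - x)) = card ((x' - y) \<union> (y - x'))"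
  shows "\<exists>\<sigma>. bij \<sigma> \<and> \<sigma> ` x = x' \<and> \<sigma> ` y = y \<and> \<sigma> ` {0..<n} = {0..<n}"
proof -
  have fin: "finite x" "finite x'" "finite y"
    using finite_subset[OF x] finite_subset[OF x'] finite_subset[OF y] by auto
  have c1: "card x = card (x \<inter> y) + card (x - y)" "card x' = card (x' \<inter> y) + card (x' - y)"
    "card y = card (y \<inter> x) + card (y - x)" "card y = card (y \<inter> x') + card (y - x')"
    using fin card_Int_Diff by blast+
  have c2: "card (x - y) + card (y - x) = card (x' - y) + card (y - x')"
    using cd fin by (simp add: card_sym_diff)
  have e1: "card (x \<inter> y) = card (x' \<inter> y)" "card (x - y) = card (x' - y)" "card (y - x) = card (y - x')"
    using c1 c2 cx by (simp_all only: Int_commute[of y]; linarith)+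
  define P4 where "P4 = {0..<n} - (x \<union> y)"
  define P4' where "P4' = {0..<n} - (x' \<union> y)"
  have u1: "card (x \<union> y) = card (x - y) + card y"
    using fin by (subst Un_Diff_cancel2[symmetric], subst card_Un_disjoint) auto
  have u2: "card (x' \<union> y) = card (x' - y) + card y"
    using fin by (subst Un_Diff_cancel2[symmetric], subst card_Un_disjoint) auto
  have e4: "card P4 = card P4'"
  proof -
    have s: "x \<union> y \<subseteq> {0..<n}" "x' \<union> y \<subseteq> {0..<n}" using x x' y by auto
    have "finite (x \<union> y)" "finite (x' \<union> y)" using fin by auto
    then show ?thesis unfolding P4_def P4'_def
      using card_Diff_subset[OF _ s(1)] card_Diff_subset[OF _ s(2)] u1 u2 e1 by simp
  qed
  obtain h1 where h1: "bij_betw h1 (x \<inter> y) (x' \<inter> y)"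
    using finite_same_card_bij fin e1 by blast
  obtain h2 where h2: "bij_betw h2 (x - y) (x' - y)"
    using finite_same_card_bij fin e1 by blast
  obtain h3 where h3: "bij_betw h3 (y - x) (y - x')"
    using finite_same_card_bij fin e1 by blast
  obtain h4 where h4: "bij_betw h4 P4 P4'"
    using finite_same_card_bij e4 unfolding P4_def P4'_def by blast
  define \<sigma> where "\<sigma> i = (if i \<in> x \<inter> y then h1 i else if i \<in> x - y then h2 i
     else if i \<in> y - x then h3 i else if i \<in> P4 then h4 i else i)" for i
  have b1: "bij_betw \<sigma> (x \<inter> y) (x' \<inter> y)"
    using h1 by (rule bij_betw_cong[THEN iffD1, rotated]) (auto simp: \<sigma>_def)
  have b2: "bij_betw \<sigma> (x - y) (x' - y)"
    using h2 by (rule bij_betw_cong[THEN iffD1, rotated]) (auto simp: \<sigma>_def)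
  have b3: "bij_betw \<sigma> (y - x) (y - x')"
    using h3 by (rule bij_betw_cong[THEN iffD1, rotated]) (auto simp: \<sigma>_def)
  have b4: "bij_betw \<sigma> P4 P4'"
    using h4 by (rule bij_betw_cong[THEN iffD1, rotated]) (auto simp: \<sigma>_def P4_def)
  have b5: "bij_betw \<sigma> (- {0..<n}) (- {0..<n})"
    by (rule bij_betw_cong[THEN iffD1, rotated, of id]) (use x y in \<open>auto simp: \<sigma>_def P4_def\<close>)
  have bx: "bij_betw \<sigma> x x'"
  proof -
    have "bij_betw \<sigma> ((x \<inter> y) \<union> (x - y)) ((x' \<inter> y) \<union> (x' - y))"
      by (rule bij_betw_combine[OF b1 b2]) auto
    moreover have "(x \<inter> y) \<union> (x - y) = x" "(x' \<inter> y) \<union> (x' - y) = x'" by auto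
    ultimately show ?thesis by simp
  qed
  have by': "bij_betw \<sigma> y y"
  proof -
    have "bij_betw \<sigma> ((x \<inter> y) \<union> (y - x)) ((x' \<inter> y) \<union> (y - x'))"
      by (rule bij_betw_combine[OF b1 b3]) auto
    moreover have "(x \<inter> y) \<union> (y - x) = y" "(x' \<inter> y) \<union> (y - x') = y" by auto
    ultimately show ?thesis by simp
  qed
  have bn: "bij_betw \<sigma> {0..<n} {0..<n}"
  proof -
    have "bij_betw \<sigma> (((x \<inter> y) \<union> (x - y)) \<union> (y - x) \<union> P4) (((x' \<inter> y) \<union> (x' - y)) \<union> (y - x') \<union> P4')"
      by (intro bij_betw_combine b1 b2 b3 b4) (auto simp: P4'_def)
    moreover have "((x \<inter> y) \<union> (x - y)) \<union> (y - x) \<union> P4 = {0..<n}"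
      using x y by (auto simp: P4_def)
    moreover have "((x' \<inter> y) \<union> (x' - y)) \<union> (y - x') \<union> P4' = {0..<n}"
      using x' y by (auto simp: P4'_def)
    ultimately show ?thesis by simp
  qed
  have "bij_betw \<sigma> ({0..<n} \<union> - {0..<n}) ({0..<n} \<union> - {0..<n})"
    by (rule bij_betw_combine[OF bn b5]) auto
  hence "bij \<sigma>" by simp
  thus ?thesis using bx by' bn by (auto simp: bij_betw_def)
qed

lemma hdist_image:
  assumes "inj \<sigma>"
  shows "hdist (\<sigma> ` a) (\<sigma> ` b) = hdist a b"
proof -
  have "(\<sigma> ` a - \<sigma> ` b) \<union> (\<sigma> ` b - \<sigma> ` a) = \<sigma> ` ((a - b) \<union> (b - a))"
    using assms by (simp add: image_set_diff image_Un)
  then show ?thesis unfolding hdist_def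
    using assms by (simp add: card_image inj_on_subset)
qed

lemma weight_image:
  assumes "inj \<sigma>"
  shows "weight (\<sigma> ` a) = weight a"
  using hdist_image[OF assms, of a "{}"] by (simp add: weight_def)

lemma ball_image:
  assumes "bij \<sigma>" "\<sigma> ` {0..<n} = {0..<n}"
  shows "bij_betw (image \<sigma>) (ball n r) (ball n r)"
proof (rule bij_betw_imageI)
  have inj: "inj \<sigma>" using assms(1) bij_is_inj by blast
  have surj: "surj \<sigma>" using assms(1) bij_is_surj by blast
  have mem: "\<sigma> ` u \<in> ball n r \<longleftrightarrow> u \<in> ball n r" for u
  proof -
    have "\<sigma> ` u \<subseteq> \<sigma> ` {0..<n} \<longleftrightarrow> u \<subseteq> {0..<n}"
      using inj by (rule inj_image_subset_iff)
    then show ?thesis using assms(2) weight_image[OF inj, of u]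
      unfolding ball_def cube_def by simp
  qed
  show "inj_on (image \<sigma>) (ball n r)"
  proof (rule inj_onI)
    fix a b assume "\<sigma> ` a = \<sigma> ` b"
    then show "a = b" using inj by (simp add: inj_image_eq_iff)
  qed
  show "image \<sigma> ` ball n r = ball n r"
  proof
    show "image \<sigma> ` ball n r \<subseteq> ball n r"
      using mem by blast
  next
    show "ball n r \<subseteq> image \<sigma> ` ball n r"
    proof
      fix v assume v: "v \<in> ball n r"
      have e: "\<sigma> ` (\<sigma> -` v) = v" using surj by (rule surj_image_vimage_eq)
      then have "\<sigma> -` v \<in> ball n r" using v mem[of "\<sigma> -` v"] by simp
      then show "v \<in> image \<sigma> ` ball n r" using e by (metis image_eqI)
    qed
  qed
qed

theorem lemma2p1:
  fixes n r :: nat and y :: "nat set"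
  assumes "2 * r \<le> n"
    and "y \<in> ball n r"
  shows "\<forall>f \<in> S_space (ball n r) y.
           mat_apply (ball n r) (adj_matrix (ball n r)) f \<in> S_space (ball n r) y"
proof
  fix f assume f: "f \<in> S_space (ball n r) y"
  let ?B = "ball n r"
  show "mat_apply ?B (adj_matrix ?B) f \<in> S_space ?B y"
    unfolding S_space_def mem_Collect_eq
  proof (intro ballI impI)
    fix x x' assume x: "x \<in> ?B" and x': "x' \<in> ?B"
      and eq: "weight x = weight x' \<and> hdist x y = hdist x' y"
    have sub: "x \<subseteq> {0..<n}" "x' \<subseteq> {0..<n}" "y \<subseteq> {0..<n}"
      using x x' assms(2) by (auto simp: ball_def cube_def)
    obtain \<sigma> where s: "bij \<sigma>" "\<sigma> ` x = x'" "\<sigma> ` y = y" "\<sigma> ` {0..<n} = {0..<n}"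
    proof -
      have "card x = card x'" using eq by (simp add: weight_def hdist_def)
      moreover have "card ((x - y) \<union> (y - x)) = card ((x' - y) \<union> (y - x'))"
        using eq by (simp add: hdist_def)
      ultimately show ?thesis using perm_exists[OF sub] that by blast
    qed
    have inj: "inj \<sigma>" using s(1) bij_is_inj by blast
    have bb: "bij_betw (image \<sigma>) ?B ?B" using ball_image[OF s(1) s(4)] .
    have "mat_apply ?B (adj_matrix ?B) f x' = (\<Sum>z\<in>?B. adj_matrix ?B (\<sigma> ` x) z * f z)"
      by (simp add: mat_apply_def s(2))
    also have "\<dots> = (\<Sum>u\<in>?B. adj_matrix ?B (\<sigma> ` x) (\<sigma> ` u) * f (\<sigma> ` u))"
      using sum.reindex_bij_betw[OF bb, of "\<lambda>z. adj_matrix ?B (\<sigma> ` x) z * f z"] by simp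
    also have "\<dots> = (\<Sum>u\<in>?B. adj_matrix ?B x u * f u)"
    proof (rule sum.cong[OF refl])
      fix u assume u: "u \<in> ?B"
      have su: "\<sigma> ` u \<in> ?B" using bb u by (meson bij_betwE)
      have sx: "\<sigma> ` x \<in> ?B" using bb x by (meson bij_betwE)
      have fS: "\<forall>a\<in>?B. \<forall>b\<in>?B. weight a = weight b \<and> hdist a y = hdist b y \<longrightarrow> f a = f b"
        using f unfolding S_space_def by blast
      have "hdist (\<sigma> ` u) y = hdist u y"
        using hdist_image[OF inj, of u y] s(3) by simp
      then have "f (\<sigma> ` u) = f u"
        using fS[rule_format, OF su u] weight_image[OF inj, of u] by blast
      moreover have "adj_matrix ?B (\<sigma> ` x) (\<sigma> ` u) = adj_matrix ?B x u"
        using su sx u x hdist_image[OF inj, of x u] by (simp add: adj_matrix_def)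
      ultimately show "adj_matrix ?B (\<sigma> ` x) (\<sigma> ` u) * f (\<sigma> ` u) = adj_matrix ?B x u * f u"
        by simp
    qed
    also have "\<dots> = mat_apply ?B (adj_matrix ?B) f x" by (simp add: mat_apply_def)
    finally show "mat_apply ?B (adj_matrix ?B) f x = mat_apply ?B (adj_matrix ?B) f x'" by simp
  qed
qed

end
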